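(* Let $\mathcal H$ be a Hilbert space, and let $a,b$ be operators on $\mathcal H$ together with a dense subspace $\mathcal D$ of $\mathcal H$ such that $a^\sharp\mathcal D\subseteq\mathcal D$ and $b^\sharp\mathcal D\subseteq\mathcal D$ (where $x^\sharp$ denotes $x$ or $x^\dagger$), and $abf-baf=f$ for all $f\in\mathcal D$. Assume there is a nonzero $\varphi_0\in\mathcal D$ with $a\varphi_0=0$, and set $\varphi_n=\frac{1}{\sqrt{n!}}b^n\varphi_0$, $n\ge 0$, and $\mathcal L_\varphi=\operatorname{span}\{\varphi_n:n\ge0\}$ (finite linear combinations). For $\gamma\in\mathbb C$ let $\sigma_1=e^{\gamma a}$ and $\sigma_2=e^{\gamma b}$ be defined as the series $\sigma_1 f=\sum_{k\ge0}\frac{(\gamma a)^k}{k!}f$ and $\sigma_2 f=\sum_{k\ge0}\frac{(\gamma b)^k}{k!}f$, with domain the set of vectors $f$ for which the series converges in $\mathcal H$. Then $D(\sigma_1)\supseteq\mathcal L_\varphi$. Moreover, if there exist $r_\varphi>0$ and $\alpha_\varphi\in[0,\tfrac12)$ with $\|\varphi_n\|\le r_\varphi^n(n!)^{\alpha_\varphi}$ for all $n\ge0$, then $D(\sigma_2)\supseteq\mathcal L_\varphi$.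
   Context: Standard facts in this setting: $a\varphi_0=0$, $a\varphi_n=\sqrt n\,\varphi_{n-1}$ for $n\ge1$, $b\varphi_n=\sqrt{n+1}\,\varphi_{n+1}$, and all $\varphi_n\in\mathcal D$. *)

theory Defs
  imports "HOL-Analysis.Analysis"
begin

text \<open>The library has no class of complex vector spaces, so a complex Hilbert space is modelled
  as a (real) Banach space 'h together with a complex scalar multiplication sm extending the
  real one, and a complex inner product ip inducing the norm.
  Convention: ip is conjugate-linear in the first argument, linear in the second.\<close>
definition is_complex_hilbert ::
  "(complex \<Rightarrow> 'h::banach \<Rightarrow> 'h) \<Rightarrow> ('h \<Rightarrow> 'h \<Rightarrow> complex) \<Rightarrow> bool" where
  "is_complex_hilbert sm ip \<longleftrightarrow>
     (\<forall>c x y. sm c (x + y) = sm c x + sm c y) \<and>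
     (\<forall>c d x. sm (c + d) x = sm c x + sm d x) \<and>
     (\<forall>c d x. sm (c * d) x = sm c (sm d x)) \<and>
     (\<forall>r x. sm (complex_of_real r) x = r *\<^sub>R x) \<and>
     (\<forall>c x. norm (sm c x) = cmod c * norm x) \<and>
     (\<forall>x y z. ip x (y + z) = ip x y + ip x z) \<and>
     (\<forall>x y c. ip x (sm c y) = c * ip x y) \<and>
     (\<forall>x y. ip y x = cnj (ip x y)) \<and>
     (\<forall>x. ip x x = complex_of_real ((norm x)\<^sup>2))"

definition csubspace :: "(complex \<Rightarrow> 'h::banach \<Rightarrow> 'h) \<Rightarrow> 'h set \<Rightarrow> bool" where
  "csubspace sm D \<longleftrightarrow> 0 \<in> D \<and> (\<forall>f\<in>D. \<forall>g\<in>D. f + g \<in> D) \<and> (\<forall>c. \<forall>f\<in>D. sm c f \<in> D)"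

definition cspan :: "(complex \<Rightarrow> 'h::banach \<Rightarrow> 'h) \<Rightarrow> 'h set \<Rightarrow> 'h set" where
  "cspan sm S = {x. \<exists>F c. finite F \<and> F \<subseteq> S \<and> x = (\<Sum>v\<in>F. sm (c v) v)}"

definition linear_on :: "(complex \<Rightarrow> 'h::banach \<Rightarrow> 'h) \<Rightarrow> 'h set \<Rightarrow> ('h \<Rightarrow> 'h) \<Rightarrow> bool" where
  "linear_on sm D T \<longleftrightarrow> (\<forall>f\<in>D. \<forall>g\<in>D. \<forall>c. T (sm c f + g) = sm c (T f) + T g)"

text \<open>The adjoint of T (an operator with domain D) is defined on all of D and maps D into D:
  for every g in D there is h in D with ip g (T f) = ip h f for all f in D (h = T-dagger g).\<close>
definition adjoint_preserves :: "('h \<Rightarrow> 'h \<Rightarrow> complex) \<Rightarrow> 'h set \<Rightarrow> ('h \<Rightarrow> 'h) \<Rightarrow> bool" where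
  "adjoint_preserves ip D T \<longleftrightarrow> (\<forall>g\<in>D. \<exists>h\<in>D. \<forall>f\<in>D. ip g (T f) = ip h f)"

definition exp_dom ::
  "(complex \<Rightarrow> 'h::banach \<Rightarrow> 'h) \<Rightarrow> 'h set \<Rightarrow> ('h \<Rightarrow> 'h) \<Rightarrow> complex \<Rightarrow> 'h set" where
  "exp_dom sm D T \<gamma> = {f. (\<forall>k. (T ^^ k) f \<in> D) \<and>
      summable (\<lambda>k. sm (\<gamma> ^ k / fact k) ((T ^^ k) f))}"

end

theory Submission imports Defs begin

lemma hil:
  assumes "is_complex_hilbert sm ip"
  shows sm_add: "sm c (x + y) = sm c x + sm c y"
    and sm_mult: "sm (c * d) x = sm c (sm d x)"
    and sm_real: "sm (complex_of_real r) x = r *\<^sub>R x"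
    and sm_norm: "norm (sm c x) = cmod c * norm x"
  using assms unfolding is_complex_hilbert_def by auto

lemma sm_zero: "is_complex_hilbert sm ip \<Longrightarrow> sm c 0 = 0"
  using sm_norm[of sm ip c 0] by simp

lemma sm_one: "is_complex_hilbert sm ip \<Longrightarrow> sm 1 x = x"
  using sm_real[of sm ip 1 x] by simp

lemma sm_comm: "is_complex_hilbert sm ip \<Longrightarrow> sm c (sm d x) = sm d (sm c x)"
  by (metis sm_mult mult.commute)

lemma sm_scaleR: "is_complex_hilbert sm ip \<Longrightarrow> sm c (r *\<^sub>R x) = r *\<^sub>R sm c x"
  by (metis sm_comm sm_real)

lemma sm_sum: "is_complex_hilbert sm ip \<Longrightarrow> sm c (\<Sum>v\<in>F. f v) = (\<Sum>v\<in>F. sm c (f v))"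
  by (induction F rule: infinite_finite_induct) (auto simp: sm_zero sm_add)

lemma lin_add:
  assumes "is_complex_hilbert sm ip" "linear_on sm D T" "f \<in> D" "g \<in> D"
  shows "T (f + g) = T f + T g"
proof -
  have "T (sm 1 f + g) = sm 1 (T f) + T g" using assms unfolding linear_on_def by blast
  then show ?thesis using sm_one[OF assms(1)] by simp
qed

lemma lin_zero:
  assumes "is_complex_hilbert sm ip" "linear_on sm D T" "0 \<in> D"
  shows "T 0 = 0"
  using lin_add[OF assms(1,2,3,3)] by simp

lemma lin_sm:
  assumes "is_complex_hilbert sm ip" "linear_on sm D T" "f \<in> D" "0 \<in> D"
  shows "T (sm c f) = sm c (T f)"
proof -
  have "T (sm c f + 0) = sm c (T f) + T 0" using assms unfolding linear_on_def by blast
  then show ?thesis using lin_zero[OF assms(1,2,4)] by simp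
qed

lemma lin_scaleR:
  assumes "is_complex_hilbert sm ip" "linear_on sm D T" "f \<in> D" "0 \<in> D"
  shows "T (r *\<^sub>R f) = r *\<^sub>R (T f)"
  using lin_sm[OF assms, of "complex_of_real r"] sm_real[OF assms(1)] by simp

lemma funpow_D: "T ` D \<subseteq> D \<Longrightarrow> f \<in> D \<Longrightarrow> (T ^^ k) f \<in> D"
  by (induction k) auto

lemma lin_funpow:
  assumes "is_complex_hilbert sm ip" "linear_on sm D T" "T ` D \<subseteq> D" "csubspace sm D"
  shows "linear_on sm D (T ^^ k)"
proof (induction k)
  case 0 then show ?case by (simp add: linear_on_def)
next
  case (Suc k)
  show ?case unfolding linear_on_def
  proof (intro ballI allI)
    fix f g c assume f: "f \<in> D" and g: "g \<in> D"
    have "(T ^^ Suc k) (sm c f + g) = T (sm c ((T ^^ k) f) + (T ^^ k) g)"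
      using Suc f g by (simp add: linear_on_def)
    also have "\<dots> = sm c ((T ^^ Suc k) f) + (T ^^ Suc k) g"
      using assms(2) funpow_D[OF assms(3) f, of k] funpow_D[OF assms(3) g, of k]
      unfolding linear_on_def by simp
    finally show "(T ^^ Suc k) (sm c f + g) = sm c ((T ^^ Suc k) f) + (T ^^ Suc k) g" .
  qed
qed

lemma comb_D:
  assumes "is_complex_hilbert sm ip" "csubspace sm D" "finite F" "F \<subseteq> D"
  shows "(\<Sum>v\<in>F. sm (c v) v) \<in> D"
  using assms(3,4)
  by (induction F rule: finite_induct) (use assms(2) in \<open>auto simp: csubspace_def\<close>)

lemma lin_comb:
  assumes "is_complex_hilbert sm ip" "csubspace sm D" "linear_on sm D T" "finite F" "F \<subseteq> D"
  shows "T (\<Sum>v\<in>F. sm (c v) v) = (\<Sum>v\<in>F. sm (c v) (T v))"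
  using assms(4,5)
proof (induction F rule: finite_induct)
  case empty then show ?case using lin_zero[OF assms(1,3)] assms(2) by (simp add: csubspace_def)
next
  case (insert x F)
  have D0: "0 \<in> D" using assms(2) by (simp add: csubspace_def)
  have xD: "x \<in> D" using insert by auto
  have sD: "(\<Sum>v\<in>F. sm (c v) v) \<in> D" using comb_D[OF assms(1,2) insert(1)] insert by auto
  have smD: "sm (c x) x \<in> D" using assms(2) xD by (simp add: csubspace_def)
  have "T (\<Sum>v\<in>insert x F. sm (c v) v) = T (sm (c x) x + (\<Sum>v\<in>F. sm (c v) v))"
    using insert(1,2) by simp
  also have "\<dots> = sm (c x) (T x) + T (\<Sum>v\<in>F. sm (c v) v)"
    using lin_add[OF assms(1,3) smD sD] lin_sm[OF assms(1,3) xD D0] by simp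
  also have "\<dots> = (\<Sum>v\<in>insert x F. sm (c v) (T v))" using insert by simp
  finally show ?case .
qed

lemma span_in_exp_dom:
  assumes hil: "is_complex_hilbert sm ip" and sub: "csubspace sm D"
    and lin: "linear_on sm D T" and TD: "T ` D \<subseteq> D" and SD: "S \<subseteq> D"
    and summ: "\<And>v. v \<in> S \<Longrightarrow> summable (\<lambda>k. norm (sm (\<gamma> ^ k / fact k) ((T ^^ k) v)))"
  shows "cspan sm S \<subseteq> exp_dom sm D T \<gamma>"
proof
  fix x assume "x \<in> cspan sm S"
  then obtain F c where F: "finite F" "F \<subseteq> S" and x: "x = (\<Sum>v\<in>F. sm (c v) v)"
    unfolding cspan_def by blast
  have FD: "F \<subseteq> D" using F SD by auto
  have xD: "x \<in> D" using comb_D[OF hil sub F(1) FD] x by simp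
  have Tk: "(T ^^ k) x = (\<Sum>v\<in>F. sm (c v) ((T ^^ k) v))" for k
    using lin_comb[OF hil sub lin_funpow[OF hil lin TD sub] F(1) FD] x by simp
  have trm: "sm (\<gamma> ^ k / fact k) ((T ^^ k) x) = (\<Sum>v\<in>F. sm (c v) (sm (\<gamma> ^ k / fact k) ((T ^^ k) v)))" for k
    unfolding Tk sm_sum[OF hil] by (rule sum.cong[OF refl], rule sm_comm[OF hil])
  have bound: "norm (sm (\<gamma> ^ k / fact k) ((T ^^ k) x)) \<le> (\<Sum>v\<in>F. cmod (c v) * norm (sm (\<gamma> ^ k / fact k) ((T ^^ k) v)))" for k
    unfolding trm sm_norm[OF hil, symmetric] by (rule norm_sum)
  have "summable (\<lambda>k. \<Sum>v\<in>F. cmod (c v) * norm (sm (\<gamma> ^ k / fact k) ((T ^^ k) v)))"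
  proof (rule summable_sum)
    fix v assume "v \<in> F"
    then have "v \<in> S" using F(2) by blast
    then show "summable (\<lambda>k. cmod (c v) * norm (sm (\<gamma> ^ k / fact k) ((T ^^ k) v)))"
      by (intro summable_mult summ)
  qed
  then have "summable (\<lambda>k. sm (\<gamma> ^ k / fact k) ((T ^^ k) x))"
    by (rule summable_comparison_test[rotated]) (use bound in blast)
  then show "x \<in> exp_dom sm D T \<gamma>" unfolding exp_dom_def using funpow_D[OF TD xD] by auto
qed

lemma ratio_ev:
  fixes C \<beta> :: real and n :: nat
  assumes "\<beta> < 1" "0 \<le> C"
  shows "\<exists>N. \<forall>k\<ge>N. C * ((real k + real n + 1) powr \<beta> / (real k + 1)) \<le> 1/2"
proof -
  have lim: "filterlim (\<lambda>k. real (n+1) + real k) at_top sequentially"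
    by (rule filterlim_tendsto_add_at_top[OF tendsto_const filterlim_real_sequentially])
  have "((\<lambda>k. (real (n+1) + real k) powr (\<beta> - 1)) \<longlongrightarrow> 0) sequentially"
    using assms(1) lim by (intro tendsto_neg_powr) auto
  then have "((\<lambda>k. C * real (n+1) * (real (n+1) + real k) powr (\<beta> - 1)) \<longlongrightarrow> 0) sequentially"
    by (rule tendsto_mult_right_zero)
  then have "eventually (\<lambda>k. C * real (n+1) * (real (n+1) + real k) powr (\<beta> - 1) < 1/2) sequentially"
    by (rule order_tendstoD) simp
  then obtain N where N: "\<And>k. k \<ge> N \<Longrightarrow> C * real (n+1) * (real (n+1) + real k) powr (\<beta> - 1) < 1/2"
    unfolding eventually_sequentially by blast
  have "C * ((real k + real n + 1) powr \<beta> / (real k + 1)) \<le> 1/2" if "k \<ge> N" for k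
  proof -
    define x where "x = real k + real n + 1"
    have xpos: "x > 0" unfolding x_def by simp
    have "x powr \<beta> = x * x powr (\<beta> - 1)"
      using xpos by (simp add: powr_diff powr_one_eq_one)
    then have "x powr \<beta> / (real k + 1) = (x / (real k + 1)) * x powr (\<beta> - 1)" by simp
    also have "\<dots> \<le> real (n+1) * x powr (\<beta> - 1)"
    proof (rule mult_right_mono)
      have "x \<le> real (n+1) * (real k + 1)" unfolding x_def by (simp add: algebra_simps)
      then show "x / (real k + 1) \<le> real (n+1)" by (simp add: divide_le_eq)
    qed simp
    finally have "C * (x powr \<beta> / (real k + 1)) \<le> C * real (n+1) * x powr (\<beta> - 1)"
      using assms(2) mult_left_mono by (metis mult.assoc)
    also have "\<dots> < 1/2" using N[OF that] unfolding x_def by (simp add: add_ac)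
    finally show ?thesis unfolding x_def by simp
  qed
  then show ?thesis by blast
qed

lemma a_b_pow:
  assumes hil: "is_complex_hilbert sm ip" and sub: "csubspace sm D"
    and lin_a: "linear_on sm D a" and lin_b: "linear_on sm D b"
    and a_D: "a ` D \<subseteq> D" and b_D: "b ` D \<subseteq> D"
    and ccr: "\<forall>f\<in>D. a (b f) - b (a f) = f"
    and phi0_D: "\<phi>0 \<in> D" and a_phi0: "a \<phi>0 = 0"
  shows "a ((b ^^ Suc n) \<phi>0) = real (Suc n) *\<^sub>R (b ^^ n) \<phi>0"
proof (induction n)
  case 0
  have "a (b \<phi>0) = \<phi>0 + b (a \<phi>0)" using ccr phi0_D by (metis diff_eq_eq add.commute)
  also have "b (a \<phi>0) = 0" using a_phi0 lin_zero[OF hil lin_b] sub by (simp add: csubspace_def)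
  finally show ?case by simp
next
  case (Suc n)
  define x where "x = (b ^^ Suc n) \<phi>0"
  have xD: "x \<in> D" unfolding x_def using funpow_D[OF b_D phi0_D] .
  have nD: "(b ^^ n) \<phi>0 \<in> D" using funpow_D[OF b_D phi0_D] .
  have D0: "0 \<in> D" using sub by (simp add: csubspace_def)
  have "a ((b ^^ Suc (Suc n)) \<phi>0) = a (b x)" unfolding x_def by simp
  also have "\<dots> = x + b (a x)" using ccr xD by (metis diff_eq_eq add.commute)
  also have "b (a x) = real (Suc n) *\<^sub>R x"
    using Suc lin_scaleR[OF hil lin_b nD D0] unfolding x_def by simp
  also have "x + real (Suc n) *\<^sub>R x = real (Suc (Suc n)) *\<^sub>R x"
    by (simp only: of_nat_Suc scaleR_add_left scaleR_one)
  finally show ?case unfolding x_def .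
qed


lemma a_kill:
  assumes hil: "is_complex_hilbert sm ip" and sub: "csubspace sm D"
    and lin_a: "linear_on sm D a" and lin_b: "linear_on sm D b"
    and a_D: "a ` D \<subseteq> D" and b_D: "b ` D \<subseteq> D"
    and ccr: "\<forall>f\<in>D. a (b f) - b (a f) = f"
    and phi0_D: "\<phi>0 \<in> D" and a_phi0: "a \<phi>0 = 0"
  shows "(a ^^ Suc n) ((b ^^ n) \<phi>0) = 0"
proof (induction n)
  case 0 then show ?case using a_phi0 by simp
next
  case (Suc n)
  have D0: "0 \<in> D" using sub by (simp add: csubspace_def)
  have nD: "(b ^^ n) \<phi>0 \<in> D" using funpow_D[OF b_D phi0_D] .
  have "(a ^^ Suc (Suc n)) ((b ^^ Suc n) \<phi>0) = (a ^^ Suc n) (a ((b ^^ Suc n) \<phi>0))"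
    by (simp only: funpow_Suc_right o_apply)
  also have "\<dots> = (a ^^ Suc n) (real (Suc n) *\<^sub>R (b ^^ n) \<phi>0)"
    using a_b_pow[OF assms] by simp
  also have "\<dots> = real (Suc n) *\<^sub>R (a ^^ Suc n) ((b ^^ n) \<phi>0)"
    using lin_scaleR[OF hil lin_funpow[OF hil lin_a a_D sub] nD D0] .
  finally show ?case using Suc by simp
qed

lemma w_Suc:
  fixes \<alpha> :: real
  shows "sqrt (fact (Suc m)) * fact (Suc m) powr \<alpha> = (real (Suc m)) powr (1/2 + \<alpha>) * (sqrt (fact m) * fact m powr \<alpha>)"
proof -
  have f: "(fact (Suc m) :: real) = real (Suc m) * fact m" by (simp add: fact_Suc)
  have "sqrt (fact (Suc m)) * fact (Suc m) powr \<alpha> = sqrt (real (Suc m)) * sqrt (fact m) * (real (Suc m) powr \<alpha> * fact m powr \<alpha>)"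
    unfolding f by (simp add: real_sqrt_mult powr_mult)
  also have "sqrt (real (Suc m)) = real (Suc m) powr (1/2)" by (simp add: powr_half_sqrt)
  also have "real (Suc m) powr (1/2 + \<alpha>) = real (Suc m) powr (1/2) * real (Suc m) powr \<alpha>"
    by (simp add: powr_add)
  ultimately show ?thesis by (simp add: algebra_simps)
qed

theorem mainTheorem1:
  fixes sm :: "complex \<Rightarrow> 'h::banach \<Rightarrow> 'h" and ip :: "'h \<Rightarrow> 'h \<Rightarrow> complex"
    and a b :: "'h \<Rightarrow> 'h" and D :: "'h set" and \<phi>0 :: 'h and \<gamma> :: complex
  assumes hilbert: "is_complex_hilbert sm ip"
    and subsp: "csubspace sm D"
    and dense: "closure D = UNIV"
    and lin_a: "linear_on sm D a" and lin_b: "linear_on sm D b"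
    and a_D: "a ` D \<subseteq> D" and b_D: "b ` D \<subseteq> D"
    and adj_a: "adjoint_preserves ip D a" and adj_b: "adjoint_preserves ip D b"
    and ccr: "\<forall>f\<in>D. a (b f) - b (a f) = f"
    and phi0_D: "\<phi>0 \<in> D" and phi0_nz: "\<phi>0 \<noteq> 0" and a_phi0: "a \<phi>0 = 0"
  defines "\<phi> \<equiv> (\<lambda>n. (1 / sqrt (fact n)) *\<^sub>R (b ^^ n) \<phi>0)"
    and "L \<equiv> cspan sm (range (\<lambda>n. (1 / sqrt (fact n)) *\<^sub>R (b ^^ n) \<phi>0))"
  shows "L \<subseteq> exp_dom sm D a \<gamma> \<and>
         ((\<exists>r>0. \<exists>\<alpha>. 0 \<le> \<alpha> \<and> \<alpha> < 1/2 \<and> (\<forall>n. norm (\<phi> n) \<le> r ^ n * (fact n) powr \<alpha>))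
            \<longrightarrow> L \<subseteq> exp_dom sm D b \<gamma>)"
proof -
  define S where "S = range (\<lambda>n. (1 / sqrt (fact n)) *\<^sub>R (b ^^ n) \<phi>0)"
  have LS: "L = cspan sm S" unfolding L_def S_def ..
  have D0: "0 \<in> D" using subsp by (simp add: csubspace_def)
  have scD: "r *\<^sub>R x \<in> D" if "x \<in> D" for r x
    using subsp that sm_real[OF hilbert, of r x] unfolding csubspace_def by metis
  have SD: "S \<subseteq> D" unfolding S_def using scD funpow_D[OF b_D phi0_D] by blast
  have part1: "L \<subseteq> exp_dom sm D a \<gamma>"
    unfolding LS
  proof (rule span_in_exp_dom[OF hilbert subsp lin_a a_D SD])
    fix v assume "v \<in> S"
    then obtain n where v: "v = (1 / sqrt (fact n)) *\<^sub>R (b ^^ n) \<phi>0" unfolding S_def by blast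
    have nD: "(b ^^ n) \<phi>0 \<in> D" using funpow_D[OF b_D phi0_D] .
    show "summable (\<lambda>k. norm (sm (\<gamma> ^ k / fact k) ((a ^^ k) v)))"
    proof (rule summable_finite[of "{..n}"])
      fix k assume "k \<notin> {..n}"
      then have kn: "k = (k - Suc n) + Suc n" by simp
      have "(a ^^ k) ((b ^^ n) \<phi>0) = (a ^^ (k - Suc n)) ((a ^^ Suc n) ((b ^^ n) \<phi>0))"
        by (subst kn, simp only: funpow_add o_apply)
      also have "\<dots> = 0"
        using a_kill[OF hilbert subsp lin_a lin_b a_D b_D ccr phi0_D a_phi0]
          lin_zero[OF hilbert lin_funpow[OF hilbert lin_a a_D subsp] D0] by simp
      finally have "(a ^^ k) v = 0"
        unfolding v using lin_scaleR[OF hilbert lin_funpow[OF hilbert lin_a a_D subsp] nD D0] by simp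
      then show "norm (sm (\<gamma> ^ k / fact k) ((a ^^ k) v)) = 0" using sm_zero[OF hilbert] by simp
    qed simp
  qed
  have part2: "L \<subseteq> exp_dom sm D b \<gamma>"
    if H: "\<exists>r>0. \<exists>\<alpha>. 0 \<le> \<alpha> \<and> \<alpha> < 1/2 \<and> (\<forall>n. norm (\<phi> n) \<le> r ^ n * (fact n) powr \<alpha>)"
  proof -
    obtain r \<alpha> where r: "r > 0" and \<alpha>: "0 \<le> \<alpha>" "\<alpha> < 1/2"
      and bnd: "\<And>n. norm (\<phi> n) \<le> r ^ n * (fact n) powr \<alpha>" using H by blast
    show ?thesis unfolding LS
    proof (rule span_in_exp_dom[OF hilbert subsp lin_b b_D SD])
      fix v assume "v \<in> S"
      then obtain n where v: "v = (1 / sqrt (fact n)) *\<^sub>R (b ^^ n) \<phi>0" unfolding S_def by blast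
      have nD: "(b ^^ n) \<phi>0 \<in> D" using funpow_D[OF b_D phi0_D] .
      define w where "w m = sqrt (fact m) * (fact m :: real) powr \<alpha>" for m
      define u where "u k = cmod \<gamma> ^ k / fact k * (r ^ (k + n) * w (k + n))" for k
      have w_nn: "w m \<ge> 0" for m unfolding w_def by simp
      have u_nn: "u k \<ge> 0" for k unfolding u_def using w_nn r by simp
      have tb: "norm (sm (\<gamma> ^ k / fact k) ((b ^^ k) v)) \<le> u k" for k
      proof -
        have "(b ^^ k) v = (1 / sqrt (fact n)) *\<^sub>R (b ^^ (k + n)) \<phi>0"
          unfolding v using lin_scaleR[OF hilbert lin_funpow[OF hilbert lin_b b_D subsp] nD D0]
          by (simp add: funpow_add)
        also have "(b ^^ (k + n)) \<phi>0 = sqrt (fact (k + n)) *\<^sub>R \<phi> (k + n)"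
          unfolding \<phi>_def by simp
        finally have eq: "(b ^^ k) v = (1 / sqrt (fact n) * sqrt (fact (k + n))) *\<^sub>R \<phi> (k + n)"
          by simp
        have c1: "1 / sqrt (fact n) \<le> (1::real)" by simp
        have "norm ((b ^^ k) v) = 1 / sqrt (fact n) * (sqrt (fact (k + n)) * norm (\<phi> (k + n)))"
          unfolding eq by simp
        also have "\<dots> \<le> 1 * (sqrt (fact (k + n)) * norm (\<phi> (k + n)))"
          by (rule mult_right_mono[OF c1]) simp
        also have "\<dots> \<le> sqrt (fact (k + n)) * (r ^ (k + n) * fact (k + n) powr \<alpha>)"
          using bnd[of "k + n"] by (simp add: mult_left_mono)
        finally have nb: "norm ((b ^^ k) v) \<le> r ^ (k + n) * w (k + n)"
          unfolding w_def by (simp add: algebra_simps)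
        have "norm (sm (\<gamma> ^ k / fact k) ((b ^^ k) v)) = cmod \<gamma> ^ k / fact k * norm ((b ^^ k) v)"
          by (simp add: sm_norm[OF hilbert] norm_divide norm_power)
        also have "\<dots> \<le> u k" unfolding u_def
          by (rule mult_left_mono[OF nb]) simp
        finally show ?thesis .
      qed
      have usum: "summable u"
      proof -
        obtain N where N: "\<And>k. k \<ge> N \<Longrightarrow> (cmod \<gamma> * r) * ((real k + real n + 1) powr (1/2 + \<alpha>) / (real k + 1)) \<le> 1/2"
          using ratio_ev[of "1/2 + \<alpha>" "cmod \<gamma> * r" n] \<alpha> r by auto
        show ?thesis
        proof (rule summable_ratio_test[of "1/2" N])
          fix k assume k: "k \<ge> N"
          have "u (Suc k) = u k * ((cmod \<gamma> * r) * ((real k + real n + 1) powr (1/2 + \<alpha>) / (real k + 1)))"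
          proof -
            have ws: "w (Suc (k + n)) = (real k + real n + 1) powr (1/2 + \<alpha>) * w (k + n)"
              unfolding w_def using w_Suc[where m="k + n" and \<alpha>=\<alpha>] by (simp add: add_ac)
            show ?thesis unfolding u_def using ws
              by (simp add: field_simps)
          qed
          also have "\<dots> \<le> u k * (1/2)" using N[OF k] u_nn by (intro mult_left_mono) auto
          finally show "norm (u (Suc k)) \<le> 1/2 * norm (u k)" using u_nn by simp
        qed simp
      qed
      show "summable (\<lambda>k. norm (sm (\<gamma> ^ k / fact k) ((b ^^ k) v)))"
        by (rule summable_comparison_test[OF _ usum]) (use tb in simp)
    qed
  qed
  show ?thesis using part1 part2 by blast
qed

end
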